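(* Let $Q$ be a quiver without oriented cycles and $\mathbf{1}$ the dimension vector with $\mathbf{1}(x)=1$ for all $x\in Q_0$. For every $W\in\operatorname{Rep}(Q,\mathbf{1})$, the orbit semigroup $S(W)$ is saturated.
   Context: Work over an algebraically closed field $k$ of characteristic zero. $\operatorname{Rep}(Q,\mathbf{1})=k^{Q_1}$ with the torus $\operatorname{GL}(\mathbf{1})=(k^* )^{Q_0}$ acting by $(g\cdot W)(a)=g(ha)W(a)g(ta)^{-1}$. For $\sigma\in\mathbb{Z}^{Q_0}$, $\operatorname{SI}(Q,\mathbf{1})_\sigma$ is the space of polynomial functions $f$ with $g\cdot f=\sigma(g)f$, $\sigma(g)=\prod_xg(x)^{\sigma(x)}$, and $S(W)=\{\sigma\in\mathbb{Z}^{Q_0}\mid\exists f\in\operatorname{SI}(Q,\mathbf{1})_\sigma,\ f(W)\ne0\}$. Saturated means $n\sigma\in S(W)$ for some integer $n\ge1$ implies $\sigma\in S(W)$. *)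

theory Defs
  imports "HOL-Computational_Algebra.Polynomial"
begin

definition alg_closed_field :: "'k::field itself \<Rightarrow> bool" where
  "alg_closed_field _ \<longleftrightarrow> (\<forall>p :: 'k poly. degree p > 0 \<longrightarrow> (\<exists>x. poly p x = 0))"

definition quiver :: "'v set \<Rightarrow> 'a set \<Rightarrow> ('a \<Rightarrow> 'v) \<Rightarrow> ('a \<Rightarrow> 'v) \<Rightarrow> bool" where
  "quiver Q0 Q1 t h \<longleftrightarrow> finite Q0 \<and> finite Q1 \<and> (\<forall>a\<in>Q1. t a \<in> Q0 \<and> h a \<in> Q0)"

definition no_oriented_cycles :: "'a set \<Rightarrow> ('a \<Rightarrow> 'v) \<Rightarrow> ('a \<Rightarrow> 'v) \<Rightarrow> bool" where
  "no_oriented_cycles Q1 t h \<longleftrightarrow> acyclic {(t a, h a) | a. a \<in> Q1}"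

text \<open>Rep(Q,1) = k^{Q1}, realised as functions vanishing outside Q1.\<close>
definition rep1 :: "'a set \<Rightarrow> ('a \<Rightarrow> 'k::field) set" where
  "rep1 Q1 = {W. \<forall>a. a \<notin> Q1 \<longrightarrow> W a = 0}"

text \<open>GL(1) = (k^*)^{Q0}, realised as functions nonzero on Q0 and 1 outside.\<close>
definition torus :: "'v set \<Rightarrow> ('v \<Rightarrow> 'k::field) set" where
  "torus Q0 = {g. (\<forall>x\<in>Q0. g x \<noteq> 0) \<and> (\<forall>x. x \<notin> Q0 \<longrightarrow> g x = 1)}"

definition torus_act :: "'a set \<Rightarrow> ('a \<Rightarrow> 'v) \<Rightarrow> ('a \<Rightarrow> 'v) \<Rightarrow> ('v \<Rightarrow> 'k::field) \<Rightarrow> ('a \<Rightarrow> 'k) \<Rightarrow> ('a \<Rightarrow> 'k)" where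
  "torus_act Q1 t h g W = (\<lambda>a. if a \<in> Q1 then g (h a) * W a * inverse (g (t a)) else 0)"

definition torus_inv :: "'v set \<Rightarrow> ('v \<Rightarrow> 'k::field) \<Rightarrow> ('v \<Rightarrow> 'k)" where
  "torus_inv Q0 g = (\<lambda>x. if x \<in> Q0 then inverse (g x) else 1)"

definition character :: "'v set \<Rightarrow> ('v \<Rightarrow> int) \<Rightarrow> ('v \<Rightarrow> 'k::field) \<Rightarrow> 'k" where
  "character Q0 \<sigma> g = (\<Prod>x\<in>Q0. g x powi \<sigma> x)"

definition poly_fun :: "'a set \<Rightarrow> (('a \<Rightarrow> 'k::field) \<Rightarrow> 'k) set" where
  "poly_fun Q1 = {f. \<exists>M c. finite M \<and> (\<forall>m\<in>M. \<forall>a. a \<notin> Q1 \<longrightarrow> m a = (0::nat)) \<and>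
       (\<forall>W\<in>rep1 Q1. f W = (\<Sum>m\<in>M. c m * (\<Prod>a\<in>Q1. W a ^ m a)))}"

text \<open>SI(Q,1)_sigma: polynomial functions with g.f = sigma(g) f, where (g.f)(W) = f(g^{-1}.W).\<close>
definition SI_weight :: "'v set \<Rightarrow> 'a set \<Rightarrow> ('a \<Rightarrow> 'v) \<Rightarrow> ('a \<Rightarrow> 'v) \<Rightarrow> ('v \<Rightarrow> int) \<Rightarrow> (('a \<Rightarrow> 'k::field) \<Rightarrow> 'k) set" where
  "SI_weight Q0 Q1 t h \<sigma> = {f \<in> poly_fun Q1. \<forall>g\<in>torus Q0. \<forall>W\<in>rep1 Q1.
       f (torus_act Q1 t h (torus_inv Q0 g) W) = character Q0 \<sigma> g * f W}"

text \<open>Weights sigma in Z^{Q0}, realised as integer functions vanishing outside Q0.\<close>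
definition weights :: "'v set \<Rightarrow> ('v \<Rightarrow> int) set" where
  "weights Q0 = {\<sigma>. \<forall>x. x \<notin> Q0 \<longrightarrow> \<sigma> x = 0}"

definition orbit_semigroup :: "'v set \<Rightarrow> 'a set \<Rightarrow> ('a \<Rightarrow> 'v) \<Rightarrow> ('a \<Rightarrow> 'v) \<Rightarrow> ('a \<Rightarrow> 'k::field) \<Rightarrow> ('v \<Rightarrow> int) set" where
  "orbit_semigroup Q0 Q1 t h W = {\<sigma> \<in> weights Q0. \<exists>f \<in> SI_weight Q0 Q1 t h \<sigma>. f W \<noteq> 0}"

definition saturated :: "('v \<Rightarrow> int) set \<Rightarrow> bool" where
  "saturated S \<longleftrightarrow> (\<forall>\<sigma> (n::nat). n \<ge> 1 \<longrightarrow> (\<lambda>x. int n * \<sigma> x) \<in> S \<longrightarrow> \<sigma> \<in> S)"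

end

theory Submission
  imports Defs
begin

lemma laurent_coeff:
  fixes a :: "'i \<Rightarrow> 'k::field_char_0" and e :: "'i \<Rightarrow> int"
  assumes fin: "finite I"
    and eq: "\<And>s. s \<noteq> 0 \<Longrightarrow> (\<Sum>i\<in>I. a i * s powi e i) = b * s powi e0"
  shows "(\<Sum>i\<in>{i\<in>I. e i = e0}. a i) = b"
proof -
  define N where "N = (\<Sum>i\<in>I. \<bar>e i\<bar>) + \<bar>e0\<bar>"
  have Ne: "0 \<le> e i + N" if "i \<in> I" for i
  proof -
    have "\<bar>e i\<bar> \<le> (\<Sum>i\<in>I. \<bar>e i\<bar>)" using that fin by (intro member_le_sum) auto
    then show ?thesis unfolding N_def by linarith
  qed
  have N0: "0 \<le> e0 + N" unfolding N_def using sum_nonneg[of I "\<lambda>i. \<bar>e i\<bar>"] by linarith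
  have Nn: "0 \<le> N" unfolding N_def using sum_nonneg[of I "\<lambda>i. \<bar>e i\<bar>"] by linarith
  define p where "p = (\<Sum>i\<in>I. monom (a i) (nat (e i + N))) - monom b (nat (e0 + N))"
  have ps: "poly p s = 0" if s: "s \<noteq> 0" for s
  proof -
    have pw: "s ^ nat (f + N) = s powi f * s powi N" if "0 \<le> f + N" for f
      using that s by (simp add: power_int_nonneg_exp[symmetric] power_int_add)
    have "poly p s = (\<Sum>i\<in>I. a i * s ^ nat (e i + N)) - b * s ^ nat (e0+N)"
      by (simp add: p_def poly_sum poly_monom)
    also have "\<dots> = (\<Sum>i\<in>I. a i * s powi e i * s powi N) - b * s powi e0 * s powi N"
      using Ne N0 by (simp add: pw mult.assoc)
    also have "\<dots> = ((\<Sum>i\<in>I. a i * s powi e i) - b * s powi e0) * s powi N"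
      by (simp add: sum_distrib_right mult.assoc left_diff_distrib)
    also have "\<dots> = 0" using eq[OF s] by simp
    finally show ?thesis .
  qed
  have "p = 0"
  proof (rule ccontr)
    assume "p \<noteq> 0"
    then have "finite {x. poly p x = 0}" by (rule poly_roots_finite)
    moreover have "UNIV - {0} \<subseteq> {x. poly p x = 0}" using ps by auto
    ultimately have "finite (UNIV - {0::'k})" by (rule finite_subset[rotated])
    then show False using infinite_UNIV_char_0[where 'a='k] by simp
  qed
  then have "coeff p (nat (e0 + N)) = 0" by simp
  then have "(\<Sum>i\<in>I. if nat (e i + N) = nat (e0 + N) then a i else 0) - b = 0"
    by (simp add: p_def coeff_sum coeff_monom)
  moreover have "(\<Sum>i\<in>I. if nat (e i + N) = nat (e0 + N) then a i else 0)
      = (\<Sum>i\<in>I. if e i = e0 then a i else 0)"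
  proof (intro sum.cong refl)
    fix i assume "i \<in> I"
    then have "0 \<le> e i + N" by (rule Ne)
    then have "nat (e i + N) = nat (e0 + N) \<longleftrightarrow> e i = e0" using N0 by (auto simp: nat_eq_iff2)
    then show "(if nat (e i + N) = nat (e0 + N) then a i else 0) = (if e i = e0 then a i else 0)" by simp
  qed
  ultimately show ?thesis by (simp add: sum.inter_filter[OF fin])
qed

lemma char_split:
  assumes "finite Q0" "x \<in> Q0"
  shows "character Q0 d (g(x:=s)) = s powi d x * (\<Prod>y\<in>Q0-{x}. g y powi d y)"
proof -
  have "character Q0 d (g(x:=s)) = (g(x:=s)) x powi d x * (\<Prod>y\<in>Q0-{x}. (g(x:=s)) y powi d y)"
    unfolding character_def using assms by (simp add: prod.remove)
  also have "(\<Prod>y\<in>Q0-{x}. (g(x:=s)) y powi d y) = (\<Prod>y\<in>Q0-{x}. g y powi d y)"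
    by (intro prod.cong) auto
  also have "(g(x:=s)) x = s" by simp
  finally show ?thesis .
qed

lemma char_indep:
  fixes C :: "'m \<Rightarrow> 'k::field_char_0" and D :: "'m \<Rightarrow> 'v \<Rightarrow> int"
  assumes finM: "finite M" and finV: "finite Q0"
    and eq: "\<And>g. g \<in> torus Q0 \<Longrightarrow> (\<Sum>m\<in>M. C m * character Q0 (D m) g) = F * character Q0 \<tau> g"
  shows "(\<Sum>m\<in>{m\<in>M. \<forall>x\<in>Q0. D m x = \<tau> x}. C m) = F"
proof -
  have main: "\<forall>g\<in>torus Q0. (\<Sum>m\<in>{m\<in>M. \<forall>x\<in>S. D m x = \<tau> x}. C m * character Q0 (D m) g) = F * character Q0 \<tau> g"
    if "S \<subseteq> Q0" for S
    using finite_subset[OF that finV] that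
  proof (induction S rule: finite_induct)
    case empty then show ?case using eq by simp
  next
    case (insert x S)
    have xQ: "x \<in> Q0" using insert by auto
    have SQ: "S \<subseteq> Q0" using insert by auto
    show ?case
    proof
      fix g :: "'v \<Rightarrow> 'k" assume g: "g \<in> torus Q0"
      define MS where "MS = {m\<in>M. \<forall>x\<in>S. D m x = \<tau> x}"
      define R where "R m = (\<Prod>y\<in>Q0-{x}. g y powi D m y)" for m
      define Rt where "Rt = (\<Prod>y\<in>Q0-{x}. g y powi \<tau> y)"
      have finMS: "finite MS" unfolding MS_def using finM by simp
      have L: "(\<Sum>m\<in>MS. (C m * R m) * s powi D m x) = (F * Rt) * s powi \<tau> x" if s: "s \<noteq> 0" for s
      proof -
        have gs: "g(x:=s) \<in> torus Q0" using g s xQ by (auto simp: torus_def)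
        have "(\<Sum>m\<in>MS. C m * character Q0 (D m) (g(x:=s))) = F * character Q0 \<tau> (g(x:=s))"
          using insert.IH[OF SQ] gs unfolding MS_def by blast
        then show ?thesis
          by (simp add: char_split[OF finV xQ] R_def Rt_def mult.commute mult.left_commute)
      qed
      have E: "(\<Sum>m\<in>{m\<in>MS. D m x = \<tau> x}. C m * R m) = F * Rt"
        by (rule laurent_coeff[OF finMS L])
      have "(\<Sum>m\<in>{m\<in>MS. D m x = \<tau> x}. C m * (g x powi D m x * R m))
          = (\<Sum>m\<in>{m\<in>MS. D m x = \<tau> x}. C m * R m * g x powi \<tau> x)"
        by (intro sum.cong) (auto simp: mult_ac)
      also have "\<dots> = (\<Sum>m\<in>{m\<in>MS. D m x = \<tau> x}. C m * R m) * g x powi \<tau> x"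
        by (simp add: sum_distrib_right)
      also have "\<dots> = F * (g x powi \<tau> x * Rt)" using E by (simp add: mult_ac)
      finally have "(\<Sum>m\<in>{m\<in>MS. D m x = \<tau> x}. C m * (g x powi D m x * R m)) = F * (g x powi \<tau> x * Rt)" .
      moreover have "{m\<in>MS. D m x = \<tau> x} = {m\<in>M. \<forall>y\<in>insert x S. D m y = \<tau> y}"
        unfolding MS_def by auto
      moreover have "character Q0 d g = g x powi d x * (\<Prod>y\<in>Q0-{x}. g y powi d y)" for d
        using char_split[OF finV xQ, of d g "g x"] by simp
      ultimately show "(\<Sum>m\<in>{m\<in>M. \<forall>y\<in>insert x S. D m y = \<tau> y}. C m * character Q0 (D m) g) = F * character Q0 \<tau> g"
        by (simp add: R_def Rt_def)
    qed
  qed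
  have g1: "(\<lambda>_. 1) \<in> torus Q0" by (simp add: torus_def)
  have "character Q0 d (\<lambda>_. 1::'k) = 1" for d by (simp add: character_def)
  with main[OF order_refl] g1 show ?thesis by auto
qed

definition Div :: "'a set \<Rightarrow> ('a \<Rightarrow> 'v) \<Rightarrow> ('a \<Rightarrow> 'v) \<Rightarrow> ('a \<Rightarrow> nat) \<Rightarrow> 'v \<Rightarrow> int" where
  "Div A t h m x = (\<Sum>a\<in>{a\<in>A. t a = x}. int (m a)) - (\<Sum>a\<in>{a\<in>A. h a = x}. int (m a))"

lemma Div_add: "Div A t h (\<lambda>a. m a + p a) x = Div A t h m x + Div A t h p x"
  unfolding Div_def by (simp add: sum.distrib)

lemma Div_arc:
  assumes "finite A" "a0 \<in> A"
  shows "Div A t h (\<lambda>a. if a = a0 then 1 else 0) x = (if t a0 = x then 1 else 0) - (if h a0 = x then 1 else 0)"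
proof -
  have "(\<Sum>a\<in>{a\<in>A. P a}. int (if a = a0 then 1 else 0)) = (if P a0 then 1 else 0)" for P
  proof -
    have "(\<Sum>a\<in>{a\<in>A. P a}. int (if a = a0 then 1 else 0)) = (\<Sum>a\<in>{a\<in>A. P a}. (if a = a0 then 1 else 0))"
      by (intro sum.cong) auto
    also have "\<dots> = (if a0 \<in> {a\<in>A. P a} then 1 else 0)" using assms(1) by (simp add: sum.delta)
    finally show ?thesis using assms(2) by simp
  qed
  then show ?thesis unfolding Div_def by simp
qed

lemma path_flow:
  assumes finA: "finite A" and xy: "(x,y) \<in> {(t a, h a) | a. a \<in> A}\<^sup>*"
  shows "\<exists>p. \<forall>w. Div A t h p w = (if w = x then 1 else 0) - (if w = y then 1 else 0)"
  using xy
proof (induction rule: rtrancl_induct)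
  case base
  show ?case by (rule exI[of _ "\<lambda>_. 0"]) (simp add: Div_def)
next
  case (step y z)
  then obtain a0 where a0: "a0 \<in> A" "t a0 = y" "h a0 = z" by auto
  from step.IH obtain p where p: "\<forall>w. Div A t h p w = (if w = x then 1 else 0) - (if w = y then 1 else 0)" by blast
  show ?case
    by (rule exI[of _ "\<lambda>a. p a + (if a = a0 then 1 else 0)"])
       (simp add: Div_add Div_arc[OF finA a0(1)] p a0)
qed

lemma sum_fiber:
  assumes "finite A" "finite X"
  shows "(\<Sum>x\<in>X. \<Sum>a\<in>{a\<in>A. t a = x}. f a) = (\<Sum>a\<in>{a\<in>A. t a \<in> X}. f a)"
proof -
  have "(\<Sum>x\<in>X. \<Sum>a\<in>{a\<in>{a\<in>A. t a \<in> X}. t a = x}. f a) = (\<Sum>a\<in>{a\<in>A. t a \<in> X}. f a)"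
    using assms by (intro sum.group) auto
  moreover have "(\<Sum>x\<in>X. \<Sum>a\<in>{a\<in>{a\<in>A. t a \<in> X}. t a = x}. f a) = (\<Sum>x\<in>X. \<Sum>a\<in>{a\<in>A. t a = x}. f a)"
    by (intro sum.cong refl arg_cong2[where f=sum]) auto
  ultimately show ?thesis by simp
qed

lemma Div_sum:
  assumes "finite A" "finite X"
  shows "(\<Sum>x\<in>X. Div A t h m x) = (\<Sum>a\<in>{a\<in>A. t a \<in> X}. int (m a)) - (\<Sum>a\<in>{a\<in>A. h a \<in> X}. int (m a))"
  unfolding Div_def using assms by (simp add: sum_subtractf sum_fiber)

lemma Div_sum_closed:
  assumes "finite A" "finite X" "\<forall>a\<in>A. t a \<in> X \<longrightarrow> h a \<in> X"
  shows "(\<Sum>x\<in>X. Div A t h m x) \<le> 0"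
proof -
  have "(\<Sum>a\<in>{a\<in>A. t a \<in> X}. int (m a)) \<le> (\<Sum>a\<in>{a\<in>A. h a \<in> X}. int (m a))"
    using assms by (intro sum_mono2) auto
  then show ?thesis using Div_sum[OF assms(1,2)] by simp
qed

lemma Div_sum_V:
  assumes "finite A" "finite V" "\<forall>a\<in>A. t a \<in> V \<and> h a \<in> V"
  shows "(\<Sum>x\<in>V. Div A t h m x) = 0"
proof -
  have "{a\<in>A. t a \<in> V} = A" "{a\<in>A. h a \<in> V} = A" using assms by auto
  then show ?thesis using Div_sum[OF assms(1,2)] by simp
qed

lemma gale:
  assumes finA: "finite A" and finV: "finite V" and ends: "\<forall>a\<in>A. t a \<in> V \<and> h a \<in> V"
  shows "(\<Sum>x\<in>V. b x) = 0 \<Longrightarrow>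
    (\<forall>X. X \<subseteq> V \<longrightarrow> (\<forall>a\<in>A. t a \<in> X \<longrightarrow> h a \<in> X) \<longrightarrow> (\<Sum>x\<in>X. b x) \<le> (0::int)) \<Longrightarrow>
    \<exists>m. \<forall>x\<in>V. Div A t h m x = b x"
proof (induction "\<Sum>x\<in>V. nat (b x)" arbitrary: b rule: less_induct)
  case less
  show ?case
  proof (cases "\<exists>x\<in>V. b x > 0")
    case False
    then have nn: "\<forall>x\<in>V. 0 \<le> - b x" by (simp add: not_less)
    have s0: "(\<Sum>x\<in>V. - b x) = 0" using less.prems(1) by (simp add: sum_negf)
    have "\<forall>x\<in>V. - b x = 0" using sum_nonneg_eq_0_iff[OF finV, of "\<lambda>x. - b x"] nn s0 by blast
    then show ?thesis by (intro exI[of _ "\<lambda>_. 0"]) (simp add: Div_def)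
  next
    case True
    have cond: "\<And>X. X \<subseteq> V \<Longrightarrow> (\<forall>a\<in>A. t a \<in> X \<longrightarrow> h a \<in> X) \<Longrightarrow> (\<Sum>x\<in>X. b x) \<le> 0"
      by (rule less.prems(2)[THEN spec, THEN mp, THEN mp])
    from True obtain x where xV: "x \<in> V" and bx: "b x > 0" by blast
    define E where "E = {(t a, h a) | a. a \<in> A}"
    define R where "R = {y. (x,y) \<in> E\<^sup>*}"
    have RV: "R \<subseteq> V"
    proof
      fix y assume "y \<in> R"
      then have "(x,y) \<in> E\<^sup>*" by (simp add: R_def)
      then show "y \<in> V"
      proof (induction rule: rtrancl_induct)
        case base show ?case by (rule xV)
      next
        case (step u v)
        from step(2) obtain a where "a \<in> A" "v = h a" unfolding E_def by blast
        then show ?case using ends by blast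
      qed
    qed
    have Rcl: "\<forall>a\<in>A. t a \<in> R \<longrightarrow> h a \<in> R"
    proof (intro ballI impI)
      fix a assume "a \<in> A" "t a \<in> R"
      have 1: "(x, t a) \<in> E\<^sup>*" using \<open>t a \<in> R\<close> by (simp add: R_def)
      have 2: "(t a, h a) \<in> E" using \<open>a \<in> A\<close> unfolding E_def by blast
      show "h a \<in> R" unfolding R_def using rtrancl_into_rtrancl[OF 1 2] by simp
    qed
    have xR: "x \<in> R" by (simp add: R_def)
    define F where "F = {X. X \<subseteq> V \<and> (\<forall>a\<in>A. t a \<in> X \<longrightarrow> h a \<in> X) \<and> (\<Sum>y\<in>X. b y) = 0 \<and> x \<notin> X}"
    have "F \<subseteq> Pow V" unfolding F_def by auto
    then have finF: "finite F" using finV by (meson finite_Pow_iff finite_subset)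
    have "{} \<in> F" by (simp add: F_def)
    then obtain T where TF: "T \<in> F" and Tmaxl: "\<forall>Y\<in>F. T \<subseteq> Y \<longrightarrow> T = Y"
      using finite_has_maximal[OF finF] by blast
    have Tmax: "Y \<subseteq> T" if YF: "Y \<in> F" for Y
    proof -
      have fT: "finite T" "finite Y" using TF YF finV unfolding F_def by (auto intro: finite_subset)
      have cl: "T \<union> Y \<subseteq> V" "T \<inter> Y \<subseteq> V" using TF YF unfolding F_def by auto
      have c1: "\<forall>a\<in>A. t a \<in> T \<union> Y \<longrightarrow> h a \<in> T \<union> Y" "\<forall>a\<in>A. t a \<in> T \<inter> Y \<longrightarrow> h a \<in> T \<inter> Y"
        using TF YF unfolding F_def by auto
      have u: "(\<Sum>y\<in>T \<union> Y. b y) \<le> 0" "(\<Sum>y\<in>T \<inter> Y. b y) \<le> 0"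
        using cond[OF cl(1) c1(1)] cond[OF cl(2) c1(2)] by auto
      have "(\<Sum>y\<in>T \<union> Y. b y) + (\<Sum>y\<in>T \<inter> Y. b y) = (\<Sum>y\<in>T. b y) + (\<Sum>y\<in>Y. b y)"
        using fT by (rule sum.union_inter)
      also have "\<dots> = 0" using TF YF unfolding F_def by simp
      finally have "(\<Sum>y\<in>T \<union> Y. b y) = 0" using u by linarith
      then have "T \<union> Y \<in> F" using cl c1 TF YF unfolding F_def by auto
      with Tmaxl have "T = T \<union> Y" by blast
      then show ?thesis by blast
    qed
    have xT: "x \<notin> T" using TF by (simp add: F_def)
    have finR: "finite R" "finite T" using RV TF finV unfolding F_def by (auto intro: finite_subset)
    have "(\<Sum>y\<in>R \<union> T. b y) \<le> 0"
    proof (rule cond)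
      show "R \<union> T \<subseteq> V" using RV TF unfolding F_def by auto
      show "\<forall>a\<in>A. t a \<in> R \<union> T \<longrightarrow> h a \<in> R \<union> T" using Rcl TF unfolding F_def by auto
    qed
    moreover have "(\<Sum>y\<in>R \<union> T. b y) = (\<Sum>y\<in>T. b y) + (\<Sum>y\<in>R - T. b y)"
    proof -
      have e: "R \<union> T = T \<union> (R - T)" by blast
      have "(\<Sum>y\<in>T \<union> (R - T). b y) = (\<Sum>y\<in>T. b y) + (\<Sum>y\<in>R - T. b y)"
        using finR by (intro sum.union_disjoint) auto
      then show ?thesis by (simp only: e)
    qed
    moreover have "(\<Sum>y\<in>T. b y) = 0" using TF by (simp add: F_def)
    ultimately have sRT: "(\<Sum>y\<in>R - T. b y) \<le> 0" by simp
    have "\<exists>y\<in>R - T. b y < 0"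
    proof (rule ccontr)
      assume "\<not> ?thesis"
      then have nn: "\<forall>y\<in>R - T. 0 \<le> b y" by (auto simp: not_less)
      have "b x \<le> (\<Sum>y\<in>R - T. b y)" using xR xT finR nn by (intro member_le_sum) auto
      then show False using sRT bx by simp
    qed
    then obtain y where yR: "y \<in> R" and yT: "y \<notin> T" and by0: "b y < 0" by blast
    have yV: "y \<in> V" using yR RV by auto
    have xy: "x \<noteq> y" using bx by0 by auto
    define b' where "b' z = b z - (if z = x then 1 else 0) + (if z = y then 1 else 0)" for z
    have sb': "(\<Sum>z\<in>X. b' z) = (\<Sum>z\<in>X. b z) - (if x \<in> X then 1 else 0) + (if y \<in> X then 1 else 0)"
      if "finite X" for X
      unfolding b'_def using that by (simp add: sum.distrib sum_subtractf sum.delta)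
    have c1: "(\<Sum>z\<in>V. b' z) = 0" using sb'[OF finV] xV yV less.prems(1) by simp
    have c2: "\<forall>X. X \<subseteq> V \<longrightarrow> (\<forall>a\<in>A. t a \<in> X \<longrightarrow> h a \<in> X) \<longrightarrow> (\<Sum>z\<in>X. b' z) \<le> 0"
    proof (intro allI impI)
      fix X assume XV: "X \<subseteq> V" and Xc: "\<forall>a\<in>A. t a \<in> X \<longrightarrow> h a \<in> X"
      have fX: "finite X" using XV finV by (rule finite_subset)
      have le: "(\<Sum>z\<in>X. b z) \<le> 0" using cond[OF XV Xc] .
      show "(\<Sum>z\<in>X. b' z) \<le> 0"
      proof (cases "y \<in> X \<and> x \<notin> X")
        case True
        have "(\<Sum>z\<in>X. b z) \<noteq> 0"
        proof
          assume "(\<Sum>z\<in>X. b z) = 0"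
          then have "X \<in> F" using XV Xc True by (simp add: F_def)
          then have "X \<subseteq> T" by (rule Tmax)
          then show False using True yT by auto
        qed
        then show ?thesis using sb'[OF fX] le True by simp
      next
        case False
        then show ?thesis using sb'[OF fX] le by auto
      qed
    qed
    have lt: "(\<Sum>z\<in>V. nat (b' z)) < (\<Sum>z\<in>V. nat (b z))"
    proof (rule sum_strict_mono_ex1[OF finV])
      show "\<forall>z\<in>V. nat (b' z) \<le> nat (b z)"
      proof
        fix z assume "z \<in> V"
        show "nat (b' z) \<le> nat (b z)"
          using by0 xy unfolding b'_def by (cases "z = y") auto
      qed
      show "\<exists>z\<in>V. nat (b' z) < nat (b z)"
        using xV bx xy unfolding b'_def by (intro bexI[of _ x]) auto
    qed
    obtain m' where m': "\<forall>z\<in>V. Div A t h m' z = b' z" using less.hyps[of b', OF lt c1 c2] by (elim exE) simp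
    have xyE: "(x,y) \<in> E\<^sup>*" using yR by (simp add: R_def)
    obtain p where p: "\<forall>w. Div A t h p w = (if w = x then 1 else 0) - (if w = y then 1 else 0)"
      using path_flow[OF finA xyE[unfolded E_def]] by (elim exE) simp
    show ?thesis
      by (rule exI[of _ "\<lambda>a. m' a + p a"]) (simp add: Div_add m' p b'_def)
  qed
qed

lemma act_arc:
  assumes q: "quiver Q0 Q1 t h" and g: "g \<in> torus Q0" and a: "a \<in> Q1"
  shows "torus_act Q1 t h (torus_inv Q0 g) W0 a = W0 a * (g (t a) * inverse (g (h a)))"
proof -
  have "t a \<in> Q0" "h a \<in> Q0" using q a by (auto simp: quiver_def)
  then show ?thesis using a by (simp add: torus_act_def torus_inv_def mult_ac)
qed

lemma prod_fiber_pow: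
  assumes "finite Q1" "finite Q0" "t ` Q1 \<subseteq> Q0"
  shows "(\<Prod>a\<in>Q1. c (t a) ^ m a) = (\<Prod>x\<in>Q0. (c x :: 'k::comm_monoid_mult) ^ (\<Sum>a\<in>{a\<in>Q1. t a = x}. m a))"
proof -
  have "(\<Prod>a\<in>Q1. c (t a) ^ m a) = (\<Prod>x\<in>Q0. \<Prod>a\<in>{a\<in>Q1. t a = x}. c (t a) ^ m a)"
    using assms by (intro prod.group[symmetric]) auto
  also have "\<dots> = (\<Prod>x\<in>Q0. \<Prod>a\<in>{a\<in>Q1. t a = x}. c x ^ m a)"
    by (intro prod.cong refl) auto
  also have "\<dots> = (\<Prod>x\<in>Q0. c x ^ (\<Sum>a\<in>{a\<in>Q1. t a = x}. m a))"
    by (simp add: power_sum)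
  finally show ?thesis .
qed

lemma char_flow:
  fixes g :: "'v \<Rightarrow> 'k::field"
  assumes q: "quiver Q0 Q1 t h" and g: "g \<in> torus Q0"
  shows "(\<Prod>a\<in>Q1. (g (t a) * inverse (g (h a))) ^ m a) = character Q0 (Div Q1 t h m) g"
proof -
  have f: "finite Q1" "finite Q0" "t ` Q1 \<subseteq> Q0" "h ` Q1 \<subseteq> Q0" using q by (auto simp: quiver_def)
  have gnz: "g x \<noteq> 0" if "x \<in> Q0" for x using g that by (simp add: torus_def)
  have "(\<Prod>a\<in>Q1. (g (t a) * inverse (g (h a))) ^ m a)
      = (\<Prod>a\<in>Q1. g (t a) ^ m a) * (\<Prod>a\<in>Q1. (inverse \<circ> g) (h a) ^ m a)"
    by (simp add: power_mult_distrib prod.distrib)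
  also have "\<dots> = (\<Prod>x\<in>Q0. g x ^ (\<Sum>a\<in>{a\<in>Q1. t a = x}. m a)) *
      (\<Prod>x\<in>Q0. (inverse \<circ> g) x ^ (\<Sum>a\<in>{a\<in>Q1. h a = x}. m a))"
    using prod_fiber_pow[OF f(1,2,3), of g m] prod_fiber_pow[OF f(1,2,4), of "inverse \<circ> g" m] by simp
  also have "\<dots> = (\<Prod>x\<in>Q0. g x ^ (\<Sum>a\<in>{a\<in>Q1. t a = x}. m a) * (inverse \<circ> g) x ^ (\<Sum>a\<in>{a\<in>Q1. h a = x}. m a))"
    by (simp add: prod.distrib)
  also have "\<dots> = (\<Prod>x\<in>Q0. g x powi Div Q1 t h m x)"
  proof (intro prod.cong refl)
    fix x assume x: "x \<in> Q0"
    define P where "P = (\<Sum>a\<in>{a\<in>Q1. t a = x}. m a)"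
    define Q where "Q = (\<Sum>a\<in>{a\<in>Q1. h a = x}. m a)"
    have e: "Div Q1 t h m x = int P + - int Q"
      by (simp add: Div_def of_nat_sum P_def Q_def)
    have "g x powi Div Q1 t h m x = g x powi (int P + - int Q)" by (simp only: e)
    also have "\<dots> = g x ^ P * inverse (g x ^ Q)"
      by (simp only: power_int_add[OF disjI1[OF gnz[OF x]]] power_int_minus power_int_of_nat)
    finally have "g x powi Div Q1 t h m x = g x ^ P * inverse (g x ^ Q)" .
    then show "g x ^ (\<Sum>a\<in>{a\<in>Q1. t a = x}. m a) * (inverse \<circ> g) x ^ (\<Sum>a\<in>{a\<in>Q1. h a = x}. m a) = g x powi Div Q1 t h m x"
      by (simp add: power_inverse P_def Q_def)
  qed
  finally show ?thesis by (simp add: character_def)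
qed

lemma mono_act:
  fixes g :: "'v \<Rightarrow> 'k::field"
  assumes q: "quiver Q0 Q1 t h" and g: "g \<in> torus Q0"
  shows "(\<Prod>a\<in>Q1. (torus_act Q1 t h (torus_inv Q0 g) W0 a) ^ m a)
     = (\<Prod>a\<in>Q1. W0 a ^ m a) * character Q0 (Div Q1 t h m) g"
proof -
  have "(\<Prod>a\<in>Q1. (torus_act Q1 t h (torus_inv Q0 g) W0 a) ^ m a)
      = (\<Prod>a\<in>Q1. W0 a ^ m a * (g (t a) * inverse (g (h a))) ^ m a)"
    using act_arc[OF q g] by (intro prod.cong refl) (simp add: power_mult_distrib)
  also have "\<dots> = (\<Prod>a\<in>Q1. W0 a ^ m a) * (\<Prod>a\<in>Q1. (g (t a) * inverse (g (h a))) ^ m a)"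
    by (simp add: prod.distrib)
  finally show ?thesis using char_flow[OF q g] by simp
qed

lemma Div_restrict:
  assumes "finite Q1" "A \<subseteq> Q1" "\<forall>a\<in>Q1 - A. m a = 0"
  shows "Div Q1 t h m x = Div A t h m x"
proof -
  have "(\<Sum>a\<in>{a\<in>Q1. P a}. int (m a)) = (\<Sum>a\<in>{a\<in>A. P a}. int (m a))" for P
  proof (rule sum.mono_neutral_right)
    show "finite {a\<in>Q1. P a}" using assms(1) by simp
    show "{a\<in>A. P a} \<subseteq> {a\<in>Q1. P a}" using assms(2) by auto
    show "\<forall>i\<in>{a\<in>Q1. P a} - {a\<in>A. P a}. int (m i) = 0"
    proof
      fix i assume "i \<in> {a\<in>Q1. P a} - {a\<in>A. P a}"
      then have "i \<in> Q1 - A" by blast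
      then show "int (m i) = 0" using assms(3) by simp
    qed
  qed
  then show ?thesis unfolding Div_def by simp
qed

theorem proposition6p3:
  fixes Q0 :: "'v set" and Q1 :: "'a set" and t h :: "'a \<Rightarrow> 'v"
    and W :: "'a \<Rightarrow> 'k::field_char_0"
  assumes "alg_closed_field TYPE('k)"
    and "quiver Q0 Q1 t h"
    and "no_oriented_cycles Q1 t h"
    and "W \<in> rep1 Q1"
  shows "saturated (orbit_semigroup Q0 Q1 t h W)"
  unfolding saturated_def
proof (intro allI impI)
  fix \<sigma> :: "'v \<Rightarrow> int" and n :: nat
  assume n1: "n \<ge> 1" and ns: "(\<lambda>x. int n * \<sigma> x) \<in> orbit_semigroup Q0 Q1 t h W"
  have q: "quiver Q0 Q1 t h" by fact
  have finQ1: "finite Q1" and finQ0: "finite Q0" and ends: "\<forall>a\<in>Q1. t a \<in> Q0 \<and> h a \<in> Q0"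
    using q by (auto simp: quiver_def)
  have npos: "0 < int n" using n1 by simp
  from ns have nsw: "(\<lambda>x. int n * \<sigma> x) \<in> weights Q0"
    and "\<exists>f \<in> SI_weight Q0 Q1 t h (\<lambda>x. int n * \<sigma> x). f W \<noteq> 0"
    by (auto simp: orbit_semigroup_def)
  then obtain f where fSI: "f \<in> SI_weight Q0 Q1 t h (\<lambda>x. int n * \<sigma> x)" and fW: "f W \<noteq> 0" by blast
  have sw: "\<sigma> \<in> weights Q0" using nsw npos by (auto simp: weights_def)
  from fSI have fpoly: "f \<in> poly_fun Q1"
    and finv: "\<And>g W0. g \<in> torus Q0 \<Longrightarrow> W0 \<in> rep1 Q1 \<Longrightarrow>
       f (torus_act Q1 t h (torus_inv Q0 g) W0) = character Q0 (\<lambda>x. int n * \<sigma> x) g * f W0"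
    by (auto simp: SI_weight_def)
  from fpoly obtain M c where finM: "finite M" and Mz: "\<forall>m\<in>M. \<forall>a. a \<notin> Q1 \<longrightarrow> m a = (0::nat)"
    and frep: "\<forall>W0\<in>rep1 Q1. f W0 = (\<Sum>m\<in>M. c m * (\<Prod>a\<in>Q1. W0 a ^ m a))"
    unfolding poly_fun_def by blast
  define C where "C m = c m * (\<Prod>a\<in>Q1. W a ^ m a)" for m
  have WR: "W \<in> rep1 Q1" by fact
  have actR: "torus_act Q1 t h g' W0 \<in> rep1 Q1" for g' W0
    by (simp add: rep1_def torus_act_def)
  have eq: "(\<Sum>m\<in>M. C m * character Q0 (Div Q1 t h m) g) = f W * character Q0 (\<lambda>x. int n * \<sigma> x) g"
    if g: "g \<in> torus Q0" for g
  proof -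
    have "f (torus_act Q1 t h (torus_inv Q0 g) W) = (\<Sum>m\<in>M. c m * (\<Prod>a\<in>Q1. (torus_act Q1 t h (torus_inv Q0 g) W a) ^ m a))"
      using frep actR by blast
    also have "\<dots> = (\<Sum>m\<in>M. C m * character Q0 (Div Q1 t h m) g)"
      by (intro sum.cong refl) (simp add: mono_act[OF q g] C_def mult.assoc)
    finally show ?thesis using finv[OF g WR] by (simp add: mult.commute)
  qed
  have "(\<Sum>m\<in>{m\<in>M. \<forall>x\<in>Q0. Div Q1 t h m x = int n * \<sigma> x}. C m) = f W"
    by (rule char_indep[OF finM finQ0 eq])
  then have Snz: "(\<Sum>m\<in>{m\<in>M. \<forall>x\<in>Q0. Div Q1 t h m x = int n * \<sigma> x}. C m) \<noteq> 0" using fW by simp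
  have "\<exists>m\<in>{m\<in>M. \<forall>x\<in>Q0. Div Q1 t h m x = int n * \<sigma> x}. C m \<noteq> 0"
  proof (rule ccontr)
    assume "\<not> ?thesis"
    then have "(\<Sum>m\<in>{m\<in>M. \<forall>x\<in>Q0. Div Q1 t h m x = int n * \<sigma> x}. C m) = 0"
      by (intro sum.neutral) blast
    with Snz show False by contradiction
  qed
  then obtain m where mM: "m \<in> M" and mD: "\<forall>x\<in>Q0. Div Q1 t h m x = int n * \<sigma> x" and Cm: "C m \<noteq> 0"
    by blast
  have Wm: "(\<Prod>a\<in>Q1. W a ^ m a) \<noteq> 0" using Cm by (simp add: C_def)
  define A where "A = {a\<in>Q1. W a \<noteq> 0}"
  have AQ: "A \<subseteq> Q1" by (auto simp: A_def)
  have finA: "finite A" using AQ finQ1 by (rule finite_subset)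
  have mA: "\<forall>a\<in>Q1 - A. m a = 0"
  proof
    fix a assume a: "a \<in> Q1 - A"
    then have "W a = 0" by (simp add: A_def)
    moreover have "W a ^ m a \<noteq> 0" using Wm prod_zero_iff[OF finQ1, of "\<lambda>a. W a ^ m a"] a by blast
    ultimately show "m a = 0" by (cases "m a") auto
  qed
  have mDA: "\<forall>x\<in>Q0. Div A t h m x = int n * \<sigma> x"
    using mD Div_restrict[OF finQ1 AQ mA, of t h] by metis
  have endsA: "\<forall>a\<in>A. t a \<in> Q0 \<and> h a \<in> Q0" using ends AQ by blast
  have c1: "(\<Sum>x\<in>Q0. \<sigma> x) = 0"
  proof -
    have "int n * (\<Sum>x\<in>Q0. \<sigma> x) = (\<Sum>x\<in>Q0. Div A t h m x)"
      using mDA by (simp add: sum_distrib_left)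
    also have "\<dots> = 0" by (rule Div_sum_V[OF finA finQ0 endsA])
    finally show ?thesis using npos by simp
  qed
  have c2: "\<forall>X. X \<subseteq> Q0 \<longrightarrow> (\<forall>a\<in>A. t a \<in> X \<longrightarrow> h a \<in> X) \<longrightarrow> (\<Sum>x\<in>X. \<sigma> x) \<le> 0"
  proof (intro allI impI)
    fix X assume XQ: "X \<subseteq> Q0" and Xc: "\<forall>a\<in>A. t a \<in> X \<longrightarrow> h a \<in> X"
    have fX: "finite X" using XQ finQ0 by (rule finite_subset)
    have "int n * (\<Sum>x\<in>X. \<sigma> x) = (\<Sum>x\<in>X. Div A t h m x)"
      using mDA XQ by (simp add: sum_distrib_left subset_iff)
    also have "\<dots> \<le> 0" by (rule Div_sum_closed[OF finA fX Xc])
    finally show "(\<Sum>x\<in>X. \<sigma> x) \<le> 0" using npos by (simp add: mult_le_0_iff)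
  qed
  obtain m' where m': "\<forall>x\<in>Q0. Div A t h m' x = \<sigma> x"
    using gale[OF finA finQ0 endsA c1 c2] by blast
  define m'' where "m'' a = (if a \<in> A then m' a else 0)" for a
  have "Div A t h m'' x = Div A t h m' x" for x
    unfolding Div_def m''_def by (intro arg_cong2[where f="(-)"] sum.cong) auto
  moreover have "Div Q1 t h m'' x = Div A t h m'' x" for x
    by (rule Div_restrict[OF finQ1 AQ]) (simp add: m''_def)
  ultimately have m''D: "\<forall>x\<in>Q0. Div Q1 t h m'' x = \<sigma> x" using m' by simp
  define f' where "f' W0 = (\<Prod>a\<in>Q1. W0 a ^ m'' a)" for W0 :: "'a \<Rightarrow> 'k"
  have "f' \<in> poly_fun Q1"
    unfolding poly_fun_def
  proof (rule CollectI, rule exI[of _ "{m''}"], rule exI[of _ "\<lambda>_. 1"])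
    show "finite {m''} \<and> (\<forall>m\<in>{m''}. \<forall>a. a \<notin> Q1 \<longrightarrow> m a = 0) \<and>
      (\<forall>W\<in>rep1 Q1. f' W = (\<Sum>m\<in>{m''}. 1 * (\<Prod>a\<in>Q1. W a ^ m a)))"
      using AQ by (auto simp: m''_def f'_def)
  qed
  moreover have "\<forall>g\<in>torus Q0. \<forall>W0\<in>rep1 Q1.
       f' (torus_act Q1 t h (torus_inv Q0 g) W0) = character Q0 \<sigma> g * f' W0"
  proof (intro ballI)
    fix g :: "'v \<Rightarrow> 'k" and W0 assume g: "g \<in> torus Q0"
    have "character Q0 (Div Q1 t h m'') g = character Q0 \<sigma> g"
      unfolding character_def using m''D by (intro prod.cong) auto
    then show "f' (torus_act Q1 t h (torus_inv Q0 g) W0) = character Q0 \<sigma> g * f' W0"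
      unfolding f'_def using mono_act[OF q g, of W0 m''] by (simp add: mult.commute)
  qed
  ultimately have f'SI: "f' \<in> SI_weight Q0 Q1 t h \<sigma>" by (simp add: SI_weight_def)
  have nz: "\<forall>a\<in>Q1. W a ^ m'' a \<noteq> 0"
  proof
    fix a assume aQ: "a \<in> Q1"
    show "W a ^ m'' a \<noteq> 0"
    proof (cases "a \<in> A")
      case True then show ?thesis by (simp add: m''_def A_def)
    next
      case False then show ?thesis by (simp add: m''_def)
    qed
  qed
  have "f' W \<noteq> 0"
    unfolding f'_def by (subst prod_zero_iff[OF finQ1]) (use nz in blast)
  then show "\<sigma> \<in> orbit_semigroup Q0 Q1 t h W"
    using sw f'SI by (auto simp: orbit_semigroup_def)
qed

end
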